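(* Let $p\in(0,1)$ and let $(\lambda_n)_{n\ge1}$ be a sequence with $\lambda_1=1$ and $0\le\lambda_n\le\lambda_{n-1}$ for all $n>1$. Let $r_1,r_2,\dots$ be $\{0,1\}$-valued random variables with $\Pr(r_1=1)=p$ and, for every $n\ge2$, $\Pr(r_n=1\mid r_1,\dots,r_{n-1})=\lambda_n p+(1-\lambda_n)\bar p_{n-1}$, where $\bar p_m=\frac1m\sum_{i=1}^m r_i$. Then \[\lim_{n\to\infty}\mathbb{E}\big[(\bar p_n-p)^2\big]=\lim_{n\to\infty}p(1-p)\sum_{i=1}^{n-1}\frac{1}{i(i+1)}\prod_{j=i+1}^{n-1}\Big(1-\frac{2\lambda_j}{j+1}\Big).\] *)

theory Defs
  imports "HOL-Probability.Probability"
begin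

definition pbar :: "(nat \<Rightarrow> 'a \<Rightarrow> real) \<Rightarrow> nat \<Rightarrow> 'a \<Rightarrow> real" where
  "pbar r m \<omega> = (\<Sum>i=1..m. r i \<omega>) / real m"

end

theory Submission
  imports Defs "HOL-Analysis.Analysis"
begin


lemma tannery_part:
  fixes c :: "nat \<Rightarrow> real"
  assumes c01: "\<And>j. j \<ge> 1 \<Longrightarrow> 0 \<le> c j \<and> c j \<le> 1"
  shows "\<exists>L. (\<lambda>n. \<Sum>i=1..n-1. 1 / (real i * real (i + 1)) * (\<Prod>j=i+1..n-1. c j)) \<longlonglongrightarrow> L"
proof -
  define w where "w k = 1 / (real k * real (k + 1))" for k
  define a where "a k n = (if 1 \<le> k \<and> k < n then w k * (\<Prod>j=k+1..n-1. c j) else 0)" for k n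
  define Q where "Q k m = (\<Prod>j=k+1..m. c j)" for k m
  have Qdec: "decseq (Q k)" for k
    unfolding decseq_Suc_iff
  proof
    fix m
    show "Q k (Suc m) \<le> Q k m"
    proof (cases "k + 1 \<le> Suc m")
      case True
      then have "Q k (Suc m) = Q k m * c (Suc m)" unfolding Q_def
        by (simp add: prod.nat_ivl_Suc')
      moreover have "0 \<le> Q k m" unfolding Q_def using c01 by (intro prod_nonneg) auto
      ultimately show ?thesis using c01[of "Suc m"] by (simp add: mult_left_le)
    next
      case False
      then show ?thesis unfolding Q_def by simp
    qed
  qed
  have Qnn: "0 \<le> Q k m" for k m unfolding Q_def using c01 by (intro prod_nonneg) auto
  have "\<forall>k. \<exists>L. Q k \<longlonglongrightarrow> L"
  proof
    fix k
    obtain L where LL: "Q k \<longlonglongrightarrow> L" "\<forall>i. L \<le> Q k i"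
      by (rule decseq_convergent[OF Qdec[of k], of 0]) (simp add: Qnn)
    show "\<exists>L. Q k \<longlonglongrightarrow> L" by (rule exI[of _ L]) (rule LL(1))
  qed
  from choice[OF this] obtain l where l0: "\<forall>k. Q k \<longlonglongrightarrow> l k" by (elim exE)
  have l: "Q k \<longlonglongrightarrow> l k" for k using l0 by (rule spec)
  have lim: "(\<lambda>n. a k n) \<longlonglongrightarrow> (if 1 \<le> k then w k * l k else 0)" for k
  proof (cases "1 \<le> k")
    case True
    have "(\<lambda>n. w k * Q k (n - 1)) \<longlonglongrightarrow> w k * l k"
      by (rule LIMSEQ_imp_Suc) (simp add: l tendsto_mult_left)
    moreover have "eventually (\<lambda>n. w k * Q k (n - 1) = a k n) sequentially"
      using True unfolding eventually_at_top_linorder a_def Q_def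
      by (intro exI[of _ "Suc k"]) auto
    ultimately show ?thesis using True by (simp add: tendsto_cong)
  next
    case False
    then show ?thesis by (simp add: a_def)
  qed
  have bound: "eventually (\<lambda>(k,n). norm (a k n) \<le> w k) (at_top \<times>\<^sub>F sequentially)"
  proof (intro always_eventually allI, clarify)
    fix k n
    have B: "\<bar>\<Prod>j=k+1..n-1. c j\<bar> \<le> 1" using c01
      by (subst abs_of_nonneg, intro prod_nonneg, force) (intro prod_le_1, auto)
    moreover have "0 \<le> w k" by (simp add: w_def)
    ultimately show "norm (a k n) \<le> w k"
      unfolding a_def using mult_left_le[OF B \<open>0 \<le> w k\<close>] by (auto simp: abs_mult)
  qed
  have summ: "summable w"
  proof (rule summable_comparison_test'[OF inverse_power_summable[of 2]])
    fix n :: nat assume "n \<ge> 1"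
    then show "norm (w n) \<le> inverse (real n ^ 2)"
      by (simp add: w_def power2_eq_square divide_simps)
  qed simp
  have T: "((\<lambda>n. suminf (\<lambda>k. a k n)) \<longlongrightarrow> suminf (\<lambda>k. if 1 \<le> k then w k * l k else 0)) sequentially"
    using tannerys_theorem[OF lim bound summ] by simp
  have "suminf (\<lambda>k. a k n) = (\<Sum>i=1..n-1. 1 / (real i * real (i + 1)) * (\<Prod>j=i+1..n-1. c j))" for n
    by (subst suminf_finite[of "{1..n-1}"]) (auto simp: a_def w_def intro!: sum.cong)
  with T show ?thesis by auto
qed



locale A5 = prob_space M for M :: "'a measure" +
  fixes r :: "nat \<Rightarrow> 'a \<Rightarrow> real" and lam :: "nat \<Rightarrow> real" and p :: real
  assumes p0: "0 < p" and p1: "p < 1"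
    and lam1: "lam 1 = 1"
    and lam_mono: "\<And>n. n > 1 \<Longrightarrow> 0 \<le> lam n \<and> lam n \<le> lam (n - 1)"
    and r_meas: "\<And>n. n \<ge> 1 \<Longrightarrow> r n \<in> borel_measurable M"
    and r01: "\<And>n \<omega>. n \<ge> 1 \<Longrightarrow> \<omega> \<in> space M \<Longrightarrow> r n \<omega> \<in> {0, 1}"
    and r1p: "measure M {\<omega> \<in> space M. r 1 \<omega> = 1} = p"
    and cond: "\<And>n a. n \<ge> 2 \<Longrightarrow> (\<forall>i\<in>{1..n-1}. a i \<in> {0, 1}) \<Longrightarrow>
           measure M {\<omega> \<in> space M. (\<forall>i\<in>{1..n-1}. r i \<omega> = a i) \<and> r n \<omega> = 1}
           = (lam n * p + (1 - lam n) * ((\<Sum>i=1..n-1. a i) / real (n - 1)))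
             * measure M {\<omega> \<in> space M. \<forall>i\<in>{1..n-1}. r i \<omega> = a i}"
begin

lemma lam01: "n \<ge> 1 \<Longrightarrow> 0 \<le> lam n \<and> lam n \<le> 1"
proof (induction n rule: dec_induct)
  case base then show ?case using lam1 by simp
next
  case (step n) then show ?case using lam_mono[of "Suc n"] by auto
qed

lemma pbar_meas: "pbar r n \<in> borel_measurable M"
  unfolding pbar_def[abs_def]
  by (intro borel_measurable_divide borel_measurable_sum r_meas) auto

lemma pbar01: "\<omega> \<in> space M \<Longrightarrow> 0 \<le> pbar r n \<omega> \<and> pbar r n \<omega> \<le> 1"
proof -
  assume w: "\<omega> \<in> space M"
  have "(\<Sum>i=1..n. r i \<omega>) \<le> (\<Sum>i=1..n. 1)" using r01[OF _ w] by (intro sum_mono) force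
  moreover have "0 \<le> (\<Sum>i=1..n. r i \<omega>)" using r01[OF _ w] by (intro sum_nonneg) force
  ultimately show ?thesis unfolding pbar_def by (auto simp: divide_simps)
qed

lemma integ: "f \<in> borel_measurable M \<Longrightarrow> (\<And>\<omega>. \<omega> \<in> space M \<Longrightarrow> \<bar>f \<omega>\<bar> \<le> B) \<Longrightarrow> integrable M (f :: _ \<Rightarrow> real)"
  by (rule integrable_const_bound[where B=B]) (auto intro: AE_I2)

definition cyl :: "nat \<Rightarrow> (nat \<Rightarrow> real) \<Rightarrow> 'a set" where
  "cyl m a = {\<omega> \<in> space M. \<forall>i\<in>{1..m}. r i \<omega> = a i}"

lemma r_sets: "i \<ge> 1 \<Longrightarrow> {\<omega> \<in> space M. r i \<omega> = c} \<in> sets M"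
proof -
  assume "i \<ge> 1"
  note [measurable] = r_meas[OF this]
  show ?thesis by measurable
qed

lemma cyl_sets: "cyl m a \<in> sets M"
  unfolding cyl_def by (intro sets.sets_Collect_finite_All r_sets) auto

lemma cyl1_sets: "{\<omega> \<in> space M. (\<forall>i\<in>{1..m}. r i \<omega> = a i) \<and> r n \<omega> = 1} \<in> sets M" if "n \<ge> 1"
  by (intro sets.sets_Collect_conj sets.sets_Collect_finite_All r_sets that) auto

lemma cyl_sum:
  fixes h :: "(nat \<Rightarrow> real) \<Rightarrow> real"
  assumes w: "\<omega> \<in> space M"
  shows "(\<Sum>a\<in>PiE {1..m} (\<lambda>_. {0,1}). indicator (cyl m a) \<omega> * h a) = h (restrict (\<lambda>i. r i \<omega>) {1..m})"
proof -
  let ?a0 = "restrict (\<lambda>i. r i \<omega>) {1..m}"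
  have a0: "?a0 \<in> PiE {1..m} (\<lambda>_. {0,1})" using r01[OF _ w] by auto
  have "(\<Sum>a\<in>PiE {1..m} (\<lambda>_. {0,1}). indicator (cyl m a) \<omega> * h a)
      = (\<Sum>a\<in>PiE {1..m} (\<lambda>_. {0,1}). if a = ?a0 then h a else 0)"
  proof (rule sum.cong)
    fix a assume a: "a \<in> PiE {1..m} (\<lambda>_. {0::real,1})"
    have "\<omega> \<in> cyl m a \<longleftrightarrow> a = ?a0"
    proof
      assume "\<omega> \<in> cyl m a"
      then show "a = ?a0" using a unfolding cyl_def by (auto simp: PiE_iff extensional_def fun_eq_iff)
    next
      assume "a = ?a0" then show "\<omega> \<in> cyl m a" using w unfolding cyl_def by auto
    qed
    then show "indicator (cyl m a) \<omega> * h a = (if a = ?a0 then h a else 0)" by (auto simp: indicator_def)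
  qed simp
  also have "\<dots> = h ?a0" using a0 by (subst sum.delta) (auto simp: finite_PiE)
  finally show ?thesis .
qed

lemma pbar_restrict: "pbar r m \<omega> = (\<Sum>i=1..m. restrict (\<lambda>i. r i \<omega>) {1..m} i) / real m"
  unfolding pbar_def by simp

lemma key:
  assumes n: "n \<ge> 2"
  shows "(\<integral>\<omega>. g (pbar r (n-1) \<omega>) * r n \<omega> \<partial>M)
       = (\<integral>\<omega>. g (pbar r (n-1) \<omega>) * (lam n * p + (1 - lam n) * pbar r (n-1) \<omega>) \<partial>M)"
proof -
  define m where "m = n - 1"
  have nm: "n = Suc m" "m \<ge> 1" using n by (auto simp: m_def)
  define A where "A = PiE {1..m} (\<lambda>_. {0::real,1})"
  have finA: "finite A" unfolding A_def by (intro finite_PiE) auto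
  define avg where "avg a = (\<Sum>i=1..m. a i) / real m" for a :: "nat \<Rightarrow> real"
  define S1 where "S1 a = {\<omega> \<in> space M. (\<forall>i\<in>{1..n-1}. r i \<omega> = a i) \<and> r n \<omega> = 1}" for a
  have S1s: "S1 a \<in> sets M" for a unfolding S1_def using cyl1_sets nm by auto
  have cyl_eq: "cyl m a = {\<omega> \<in> space M. \<forall>i\<in>{1..n-1}. r i \<omega> = a i}" for a
    unfolding cyl_def m_def ..
  have L: "(\<integral>\<omega>. g (pbar r m \<omega>) * r n \<omega> \<partial>M) = (\<integral>\<omega>. (\<Sum>a\<in>A. g (avg a) * indicator (S1 a) \<omega>) \<partial>M)"
  proof (rule Bochner_Integration.integral_cong[OF refl])
    fix \<omega> assume w: "\<omega> \<in> space M"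
    have rn: "r n \<omega> \<in> {0,1}" using r01[OF _ w] nm by auto
    have "(\<Sum>a\<in>A. g (avg a) * indicator (S1 a) \<omega>) = (\<Sum>a\<in>A. indicator (cyl m a) \<omega> * (g (avg a) * r n \<omega>))"
      by (intro sum.cong refl) (use rn in \<open>auto simp: S1_def cyl_eq indicator_def\<close>)
    also have "\<dots> = g (pbar r m \<omega>) * r n \<omega>"
      unfolding A_def by (subst cyl_sum[OF w]) (simp add: avg_def pbar_def)
    finally show "g (pbar r m \<omega>) * r n \<omega> = (\<Sum>a\<in>A. g (avg a) * indicator (S1 a) \<omega>)" ..
  qed
  have R: "(\<integral>\<omega>. g (pbar r m \<omega>) * (lam n * p + (1 - lam n) * pbar r m \<omega>) \<partial>M)
      = (\<integral>\<omega>. (\<Sum>a\<in>A. g (avg a) * (lam n * p + (1 - lam n) * avg a) * indicator (cyl m a) \<omega>) \<partial>M)"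
  proof (rule Bochner_Integration.integral_cong[OF refl])
    fix \<omega> assume w: "\<omega> \<in> space M"
    have "(\<Sum>a\<in>A. g (avg a) * (lam n * p + (1 - lam n) * avg a) * indicator (cyl m a) \<omega>)
        = (\<Sum>a\<in>A. indicator (cyl m a) \<omega> * (g (avg a) * (lam n * p + (1 - lam n) * avg a)))"
      by (simp add: mult_ac)
    also have "\<dots> = g (pbar r m \<omega>) * (lam n * p + (1 - lam n) * pbar r m \<omega>)"
      unfolding A_def by (subst cyl_sum[OF w]) (simp add: avg_def pbar_def)
    finally show "g (pbar r m \<omega>) * (lam n * p + (1 - lam n) * pbar r m \<omega>) = (\<Sum>a\<in>A. g (avg a) * (lam n * p + (1 - lam n) * avg a) * indicator (cyl m a) \<omega>)" ..
  qed
  have "(\<integral>\<omega>. (\<Sum>a\<in>A. g (avg a) * indicator (S1 a) \<omega>) \<partial>M) = (\<Sum>a\<in>A. g (avg a) * measure M (S1 a))"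
    using S1s by (subst Bochner_Integration.integral_sum) (auto simp: Int_absorb2 sets.sets_into_space emeasure_eq_measure)
  also have "\<dots> = (\<Sum>a\<in>A. g (avg a) * (lam n * p + (1 - lam n) * avg a) * measure M (cyl m a))"
  proof (intro sum.cong refl)
    fix a assume "a \<in> A"
    then have "\<forall>i\<in>{1..n-1}. a i \<in> {0,1}" unfolding A_def nm by auto
    from cond[OF n this] show "g (avg a) * measure M (S1 a) = g (avg a) * (lam n * p + (1 - lam n) * avg a) * measure M (cyl m a)"
      unfolding S1_def cyl_def avg_def m_def by simp
  qed
  also have "\<dots> = (\<integral>\<omega>. (\<Sum>a\<in>A. g (avg a) * (lam n * p + (1 - lam n) * avg a) * indicator (cyl m a) \<omega>) \<partial>M)"
    using cyl_sets by (subst Bochner_Integration.integral_sum) (auto simp: Int_absorb2 sets.sets_into_space emeasure_eq_measure)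
  finally show ?thesis using L R unfolding m_def by simp
qed


lemma r_integ: "n \<ge> 1 \<Longrightarrow> integrable M (r n)"
proof (rule integ[where B=1])
  fix \<omega> assume "n \<ge> 1" "\<omega> \<in> space M"
  then show "\<bar>r n \<omega>\<bar> \<le> 1" using r01[of n \<omega>] by auto
qed (rule r_meas)

lemma pbar_integ: "integrable M (pbar r m)"
  by (rule integ[where B=1]) (auto simp: pbar_meas dest: pbar01[of _ m])

lemma E_r1: "(\<integral>\<omega>. r 1 \<omega> \<partial>M) = p"
proof -
  have "(\<integral>\<omega>. r 1 \<omega> \<partial>M) = (\<integral>\<omega>. indicator {\<omega> \<in> space M. r 1 \<omega> = 1} \<omega> \<partial>M)"
  proof (rule Bochner_Integration.integral_cong[OF refl])
    fix \<omega> assume "\<omega> \<in> space M"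
    then show "r 1 \<omega> = indicator {\<omega> \<in> space M. r 1 \<omega> = 1} \<omega>"
      using r01[of 1 \<omega>] by (auto simp: indicator_def)
  qed
  also have "\<dots> = p" using r1p by (simp add: Int_absorb2 sets.sets_into_space)
  finally show ?thesis .
qed

lemma E_pbar_aux: "m \<ge> 1 \<Longrightarrow> (\<And>i. 1 \<le> i \<Longrightarrow> i \<le> m \<Longrightarrow> (\<integral>\<omega>. r i \<omega> \<partial>M) = p) \<Longrightarrow> (\<integral>\<omega>. pbar r m \<omega> \<partial>M) = p"
proof -
  assume m: "m \<ge> 1" and E: "\<And>i. 1 \<le> i \<Longrightarrow> i \<le> m \<Longrightarrow> (\<integral>\<omega>. r i \<omega> \<partial>M) = p"
  have "(\<integral>\<omega>. pbar r m \<omega> \<partial>M) = (\<Sum>i=1..m. (\<integral>\<omega>. r i \<omega> \<partial>M)) / real m"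
    unfolding pbar_def by (subst integral_divide_zero, subst Bochner_Integration.integral_sum) (auto intro: r_integ)
  also have "\<dots> = (\<Sum>i=1..m. p) / real m" using E by simp
  finally show ?thesis using m by simp
qed

lemma E_r: "n \<ge> 1 \<Longrightarrow> (\<integral>\<omega>. r n \<omega> \<partial>M) = p"
proof (induction n rule: less_induct)
  case (less n)
  show ?case
  proof (cases "n = 1")
    case True then show ?thesis using E_r1 by simp
  next
    case False
    then have n2: "n \<ge> 2" using less.prems by auto
    have Ep: "(\<integral>\<omega>. pbar r (n-1) \<omega> \<partial>M) = p"
      using n2 by (intro E_pbar_aux less.IH) auto
    have "(\<integral>\<omega>. r n \<omega> \<partial>M) = (\<integral>\<omega>. (\<lambda>_. 1) (pbar r (n-1) \<omega>) * r n \<omega> \<partial>M)" by simp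
    also have "\<dots> = (\<integral>\<omega>. (\<lambda>_. 1) (pbar r (n-1) \<omega>) * (lam n * p + (1 - lam n) * pbar r (n-1) \<omega>) \<partial>M)"
      by (rule key[OF n2])
    also have "\<dots> = lam n * p + (1 - lam n) * (\<integral>\<omega>. pbar r (n-1) \<omega> \<partial>M)"
      using pbar_integ by (simp add: prob_space)
    finally show ?thesis using Ep by (simp add: algebra_simps)
  qed
qed

lemma E_pbar: "m \<ge> 1 \<Longrightarrow> (\<integral>\<omega>. pbar r m \<omega> \<partial>M) = p"
  using E_pbar_aux E_r by auto

lemma e_rec:
  assumes n2: "n \<ge> 2"
  shows "real n ^ 2 * (\<integral>\<omega>. (pbar r n \<omega> - p)^2 \<partial>M)
    = (real (n-1) ^ 2 + 2 * real (n-1) * (1 - lam n)) * (\<integral>\<omega>. (pbar r (n-1) \<omega> - p)^2 \<partial>M) + p * (1 - p)"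
proof -
  define m where "m = n - 1"
  have nm: "n = Suc m" "m \<ge> 1" using n2 by (auto simp: m_def)
  define D where "D \<omega> = pbar r m \<omega> - p" for \<omega>
  note [measurable] = pbar_meas
  have rn_meas[measurable]: "r n \<in> borel_measurable M" using nm by (intro r_meas) auto
  have Ir: "integrable M (r n)" using nm by (intro r_integ) auto
  have ID: "integrable M D" unfolding D_def using pbar_integ by simp
  have ID2: "integrable M (\<lambda>\<omega>. (D \<omega>)^2)"
  proof (rule integ[where B=1])
    fix \<omega> assume "\<omega> \<in> space M"
    then have "\<bar>D \<omega>\<bar> \<le> 1" using pbar01[of \<omega> m] p0 p1 by (auto simp: D_def)
    then show "\<bar>(D \<omega>)^2\<bar> \<le> 1" by (simp add: abs_square_le_1)
  qed (simp add: D_def)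
  have IDr: "integrable M (\<lambda>\<omega>. D \<omega> * r n \<omega>)"
  proof (rule integ[where B=1])
    fix \<omega> assume w: "\<omega> \<in> space M"
    then have "\<bar>D \<omega>\<bar> \<le> 1" using pbar01[of \<omega> m] p0 p1 by (auto simp: D_def)
    moreover have "r n \<omega> \<in> {0,1}" using r01[of n \<omega>] w nm by auto
    ultimately show "\<bar>D \<omega> * r n \<omega>\<bar> \<le> 1" by auto
  qed (unfold D_def, measurable)
  have Ern: "(\<integral>\<omega>. r n \<omega> \<partial>M) = p" using E_r nm by simp
  have ED: "(\<integral>\<omega>. D \<omega> \<partial>M) = 0" unfolding D_def using pbar_integ E_pbar[OF nm(2)] by (simp add: prob_space)
  have EDr: "(\<integral>\<omega>. D \<omega> * r n \<omega> \<partial>M) = (1 - lam n) * (\<integral>\<omega>. (D \<omega>)^2 \<partial>M)"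
  proof -
    have "(\<integral>\<omega>. D \<omega> * r n \<omega> \<partial>M) = (\<integral>\<omega>. (\<lambda>x. x - p) (pbar r (n-1) \<omega>) * r n \<omega> \<partial>M)"
      by (simp add: D_def m_def)
    also have "\<dots> = (\<integral>\<omega>. (\<lambda>x. x - p) (pbar r (n-1) \<omega>) * (lam n * p + (1 - lam n) * pbar r (n-1) \<omega>) \<partial>M)"
      by (rule key[OF n2])
    also have "\<dots> = (\<integral>\<omega>. p * D \<omega> + (1 - lam n) * (D \<omega>)^2 \<partial>M)"
      by (rule Bochner_Integration.integral_cong) (auto simp: D_def m_def algebra_simps power2_eq_square)
    also have "\<dots> = p * (\<integral>\<omega>. D \<omega> \<partial>M) + (1 - lam n) * (\<integral>\<omega>. (D \<omega>)^2 \<partial>M)"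
      using ID ID2 by simp
    finally show ?thesis using ED by simp
  qed
  have pw: "real n ^ 2 * (pbar r n \<omega> - p)^2 = real m ^ 2 * (D \<omega>)^2 + 2 * real m * (D \<omega> * r n \<omega>)
      - 2 * real m * p * D \<omega> + (1 - 2 * p) * r n \<omega> + p^2" if w: "\<omega> \<in> space M" for \<omega>
  proof -
    have rr: "r n \<omega> * r n \<omega> = r n \<omega>" using r01[of n \<omega>] w nm by auto
    have "pbar r n \<omega> = (real m * pbar r m \<omega> + r n \<omega>) / real n"
      using nm unfolding pbar_def by (simp add: sum.nat_ivl_Suc')
    then have "real n * (pbar r n \<omega> - p) = real m * D \<omega> + (r n \<omega> - p)"
      using nm by (simp add: D_def field_simps)
    then have "real n ^ 2 * (pbar r n \<omega> - p)^2 = (real m * D \<omega> + (r n \<omega> - p))^2"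
      by (metis power_mult_distrib)
    also have "\<dots> = real m ^ 2 * (D \<omega>)^2 + 2 * real m * (D \<omega> * r n \<omega>)
      - 2 * real m * p * D \<omega> + (1 - 2 * p) * r n \<omega> + p^2"
      using rr by (simp add: power2_eq_square algebra_simps)
    finally show ?thesis .
  qed
  have "real n ^ 2 * (\<integral>\<omega>. (pbar r n \<omega> - p)^2 \<partial>M) = (\<integral>\<omega>. real n ^ 2 * (pbar r n \<omega> - p)^2 \<partial>M)"
    by simp
  also have "\<dots> = (\<integral>\<omega>. real m ^ 2 * (D \<omega>)^2 + 2 * real m * (D \<omega> * r n \<omega>)
      - 2 * real m * p * D \<omega> + (1 - 2 * p) * r n \<omega> + p^2 \<partial>M)"
    by (rule Bochner_Integration.integral_cong[OF refl]) (rule pw)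
  also have "\<dots> = real m ^ 2 * (\<integral>\<omega>. (D \<omega>)^2 \<partial>M) + 2 * real m * (\<integral>\<omega>. D \<omega> * r n \<omega> \<partial>M)
      - 2 * real m * p * (\<integral>\<omega>. D \<omega> \<partial>M) + (1 - 2 * p) * (\<integral>\<omega>. r n \<omega> \<partial>M) + p^2"
    using Ir ID ID2 IDr by (simp add: prob_space)
  also have "\<dots> = (real m ^ 2 + 2 * real m * (1 - lam n)) * (\<integral>\<omega>. (D \<omega>)^2 \<partial>M) + p * (1 - p)"
    unfolding ED EDr Ern by (simp add: algebra_simps power2_eq_square)
  finally show ?thesis unfolding D_def m_def .
qed

end

lemma (in A5) e1: "(\<integral>\<omega>. (pbar r 1 \<omega> - p)^2 \<partial>M) = p * (1 - p)"
proof -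
  have "(\<integral>\<omega>. (pbar r 1 \<omega> - p)^2 \<partial>M) = (\<integral>\<omega>. (1 - 2 * p) * r 1 \<omega> + p^2 \<partial>M)"
  proof (rule Bochner_Integration.integral_cong[OF refl])
    fix \<omega> assume "\<omega> \<in> space M"
    then have "r 1 \<omega> \<in> {0,1}" using r01[of 1 \<omega>] by auto
    then show "(pbar r 1 \<omega> - p)^2 = (1 - 2 * p) * r 1 \<omega> + p^2"
      unfolding pbar_def by (auto simp: power2_eq_square algebra_simps)
  qed
  also have "\<dots> = (1 - 2 * p) * p + p^2" using r_integ[of 1] E_r1 by (simp add: prob_space)
  finally show ?thesis by (simp add: algebra_simps power2_eq_square)
qed


lemma algG0:
  fixes a b q X l :: real
  assumes "a \<noteq> 0" "b \<noteq> 0"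
  shows "b / a * (q * ((1 - 2 * l / b) * X + 1 / (a * b))) = ((b - 2 * l) * a * q * X + q) / a ^ 2"
  using assms by (simp add: field_simps power2_eq_square)
lemma algE0:
  fixes a E Y :: real
  assumes "a \<noteq> 0" "a ^ 2 * E = Y"
  shows "E = Y / a ^ 2"
  using assms by (simp add: field_simps)
lemma step_alg:
  fixes n :: nat and q X l E en :: real
  assumes n0: "real n > 0" and R: "real (Suc n) ^ 2 * E = (real n ^ 2 + 2 * real n * (1 - l)) * en + q"
  and IH: "en = (real n + 1) / real n * (q * X)"
  shows "E = (real (Suc n) + 1) / real (Suc n) * (q * ((1 - 2 * l / real (Suc n + 1)) * X + 1 / (real (Suc n) * real (Suc n + 1))))"
proof -
  have A: "(real n ^ 2 + 2 * real n * (1 - l)) * en = (real (Suc n + 1) - 2 * l) * real (Suc n) * q * X"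
    unfolding IH using n0 by (simp add: field_simps power2_eq_square)
  have E: "E = ((real (Suc n + 1) - 2 * l) * real (Suc n) * q * X + q) / real (Suc n) ^ 2"
    by (rule algE0) (use R A in simp_all)
  have G: "real (Suc n + 1) / real (Suc n) * (q * ((1 - 2 * l / real (Suc n + 1)) * X + 1 / (real (Suc n) * real (Suc n + 1))))
     = ((real (Suc n + 1) - 2 * l) * real (Suc n) * q * X + q) / real (Suc n) ^ 2"
    by (rule algG0) simp_all
  have H: "real (Suc n) + 1 = real (Suc n + 1)" by simp
  show ?thesis unfolding H G E ..
qed

lemma S_rec:
  fixes c :: "nat \<Rightarrow> real"
  shows "(\<Sum>i=1..Suc k. 1 / (real i * real (i + 1)) * (\<Prod>j=i+1..Suc k. c j))
    = c (Suc k) * (\<Sum>i=1..k. 1 / (real i * real (i + 1)) * (\<Prod>j=i+1..k. c j)) + 1 / (real (Suc k) * real (Suc k + 1))"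
proof -
  have "(\<Sum>i=1..k. 1 / (real i * real (i + 1)) * (\<Prod>j=i+1..Suc k. c j))
      = (\<Sum>i=1..k. c (Suc k) * (1 / (real i * real (i + 1)) * (\<Prod>j=i+1..k. c j)))"
    by (intro sum.cong refl) (simp add: prod.cl_ivl_Suc)
  then show ?thesis by (simp add: sum.cl_ivl_Suc sum_distrib_left)
qed


theorem theoremA5:
  fixes M :: "'a measure" and r :: "nat \<Rightarrow> 'a \<Rightarrow> real"
    and lam :: "nat \<Rightarrow> real" and p :: real
  assumes "prob_space M"
    and "0 < p" and "p < 1"
    and "lam 1 = 1"
    and "\<And>n. n > 1 \<Longrightarrow> 0 \<le> lam n \<and> lam n \<le> lam (n - 1)"
    and "\<And>n. n \<ge> 1 \<Longrightarrow> r n \<in> borel_measurable M"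
    and "\<And>n \<omega>. n \<ge> 1 \<Longrightarrow> \<omega> \<in> space M \<Longrightarrow> r n \<omega> \<in> {0, 1}"
    and "measure M {\<omega> \<in> space M. r 1 \<omega> = 1} = p"
    and "\<And>n a. n \<ge> 2 \<Longrightarrow> (\<forall>i\<in>{1..n-1}. a i \<in> {0, 1}) \<Longrightarrow>
           measure M {\<omega> \<in> space M. (\<forall>i\<in>{1..n-1}. r i \<omega> = a i) \<and> r n \<omega> = 1}
           = (lam n * p + (1 - lam n) * ((\<Sum>i=1..n-1. a i) / real (n - 1)))
             * measure M {\<omega> \<in> space M. \<forall>i\<in>{1..n-1}. r i \<omega> = a i}"
  shows "\<exists>L. ((\<lambda>n. integral\<^sup>L M (\<lambda>\<omega>. (pbar r n \<omega> - p)^2)) \<longlonglongrightarrow> L)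
            \<and> ((\<lambda>n. p * (1 - p) * (\<Sum>i=1..n-1. 1 / (real i * real (i + 1))
                  * (\<Prod>j=i+1..n-1. 1 - 2 * lam j / real (j + 1)))) \<longlonglongrightarrow> L)"
  
proof -
  interpret A: A5 M r lam p
    by (rule A5.intro[OF assms(1) A5_axioms.intro[OF assms(2-9)]])
  define c where "c j = 1 - 2 * lam j / real (j + 1)" for j
  define S where "S n = (\<Sum>i=1..n-1. 1 / (real i * real (i + 1)) * (\<Prod>j=i+1..n-1. c j))" for n
  define e where "e n = integral\<^sup>L M (\<lambda>\<omega>. (pbar r n \<omega> - p)^2)" for n
  have c01: "0 \<le> c j \<and> c j \<le> 1" if "j \<ge> 1" for j
  proof -
    have l: "0 \<le> lam j" "lam j \<le> 1" using A.lam01[OF that] by auto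
    have j: "real j \<ge> 1" using that by simp
    have "2 * lam j \<le> real (j + 1)" using l j by simp
    then have "2 * lam j / real (j + 1) \<le> 1" by (simp add: divide_le_eq)
    moreover have "0 \<le> 2 * lam j / real (j + 1)" using l by simp
    ultimately show ?thesis unfolding c_def by linarith
  qed
  obtain L0 where L0: "S \<longlonglongrightarrow> L0" using tannery_part[of c, OF c01] unfolding S_def by blast
  have closed: "e n = (real n + 1) / real n * (p * (1 - p) * S (n + 1))" if "n \<ge> 1" for n
    using that
  proof (induction n rule: dec_induct)
    case base then show ?case using A.e1 by (simp add: e_def S_def)
  next
    case (step n)
    have R: "real (Suc n) ^ 2 * e (Suc n) = (real n ^ 2 + 2 * real n * (1 - lam (Suc n))) * e n + p * (1 - p)"
      using A.e_rec[of "Suc n"] step.hyps unfolding e_def by simp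
    have SR: "S (Suc n + 1) = c (Suc n) * S (n + 1) + 1 / (real (Suc n) * real (Suc n + 1))"
      unfolding S_def using S_rec[of c n] by simp
    have n0: "real n > 0" using step.hyps by simp
    show ?case unfolding SR c_def by (rule step_alg[OF n0 R step.IH])
  qed
  have fL: "(\<lambda>n. p * (1 - p) * S n) \<longlonglongrightarrow> p * (1 - p) * L0" by (intro tendsto_mult_left L0)
  have "(\<lambda>n. (real (Suc n)) / real n * (p * (1 - p) * S (Suc n))) \<longlonglongrightarrow> 1 * (p * (1 - p) * L0)"
    by (rule tendsto_mult[OF LIMSEQ_Suc_n_over_n LIMSEQ_Suc[OF fL]])
  moreover have "eventually (\<lambda>n. (real (Suc n)) / real n * (p * (1 - p) * S (Suc n)) = e n) sequentially"
    unfolding eventually_at_top_linorder by (intro exI[of _ 1]) (auto simp: closed)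
  ultimately have eL: "e \<longlonglongrightarrow> p * (1 - p) * L0" by (simp add: tendsto_cong)
  show ?thesis using eL fL unfolding e_def S_def c_def by blast
qed

end
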